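(* Consider the energy-harvesting model described in the context, with parameters $p\in(0,1)$, $\gamma>0$, $B>0$, $w\in\mathbb{N}$. Let $\pi^*(w)$ be an optimal look-ahead policy of the stationary form described in the context, with induced sequence $(\xi_j^* )_{j\ge1}$. Then $\Gamma^*=\mathcal{T}_\infty(\xi_1^*,\xi_2^*,\dots)$.
   Context: Model: a transmitter sends over an AWGN channel with constant gain $\gamma>0$ in discrete time slots $\tau\in\mathbb{N}$; the reward of sending energy $a$ in a slot is $\frac12\log_2(1+\gamma a)$. The transmitter has a battery of capacity $B>0$. Energy arrivals $E_1,E_2,\dots$ are i.i.d. with $\Pr(E_\tau=B)=p$, $\Pr(E_\tau=0)=1-p$, where $0<p<1$. The battery level satisfies $B_1=B$ (the optimal value does not depend on the initial level) and $B_\tau=\min\{B_{\tau-1}-A_{\tau-1}+E_\tau,\,B\}$, where the action $A_\tau$ (energy spent at time $\tau$) must satisfy $0\le A_\tau\le B_\tau$. The transmitter has look-ahead window $w\in\mathbb{N}$: at time $\tau$ it knows $E_1,\dots,E_{\tau+w}$ (and $B_1$), and a (look-ahead) policy $\pi(w)$ is a sequence of (possibly randomized) action functions $A_\tau=\mathcal{A}_\tau((E_t)_{t=1}^{\tau+w},B_1)$. Its $T$-horizon average throughput is $\Gamma_T^{\pi(w)}=\frac1T\mathbb{E}\sum_{\tau=1}^T\frac12\log_2(1+\gamma A_\tau)$, and $\Gamma^*=\sup_{\pi(w)}\liminf_{T\to\infty}\Gamma_T^{\pi(w)}$. An optimal policy exists that is deterministic, Markovian and stationary; for the Bernoulli arrivals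 it can be taken of the following form: let $d_\tau=\min\{t\in\{1,\dots,w\}:E_{\tau+t}=B\}$ if this set is nonempty and $d_\tau=0$ otherwise; then $a_\tau=b_\tau/d_\tau$ if $d_\tau\neq0$, and $a_\tau=\mathcal{A}(b_\tau)$ if $d_\tau=0$, for some fixed function $\mathcal{A}$ with $0\le\mathcal{A}(b)\le b$. The sequence induced by such a policy is $\xi_j^*=\mathcal{A}(b_j)$, where $b_1=B$ and $b_{j+1}=b_j-\xi_j^*$. A nonnegative sequence $(x_j)_{j\ge1}$ is admissible if $\sum_j x_j\le B$. For an admissible sequence, $$\mathcal{T}_\infty(x_1,x_2,\dots)=\sum_{k=1}^{w}p^2(1-p)^{k-1}\frac{k}{2}\log_2\!\Big(1+\gamma\frac{B}{k}\Big)+\sum_{j=1}^{\infty}p(1-p)^{j+w-1}\frac12\log_2(1+\gamma x_j)+\sum_{k=1}^{\infty}p^2(1-p)^{k+w-1}\frac{w}{2}\log_2\!\Big(1+\gamma\frac{B-\sum_{j=1}^{k}x_j}{w}\Big).$$ *)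

theory Defs
  imports "HOL-Probability.Probability"
begin

text \<open>Energy arrivals are encoded as a Boolean sequence e :: nat => bool, where
  e t = True means E_t = B and e t = False means E_t = 0 (time slots start at 1;
  the value e 0 is never used).\<close>

definition arrival :: "real \<Rightarrow> (nat \<Rightarrow> bool) \<Rightarrow> nat \<Rightarrow> real" where
  "arrival B e t = (if e t then B else 0)"

text \<open>Battery level: batt B e a n is the battery level B_(n+1) at time slot n+1,
  given arrivals e and energies a t spent at slots t.  B_1 = B and
  B_(tau+1) = min (B_tau - A_tau + E_(tau+1)) B.\<close>

fun batt :: "real \<Rightarrow> (nat \<Rightarrow> bool) \<Rightarrow> (nat \<Rightarrow> real) \<Rightarrow> nat \<Rightarrow> real" where
  "batt B e a 0 = B"
| "batt B e a (Suc n) = min (batt B e a n - a (Suc n) + arrival B e (Suc (Suc n))) B"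

definition arrivals_measure :: "real \<Rightarrow> (nat \<Rightarrow> bool) measure" where
  "arrivals_measure p = PiM UNIV (\<lambda>_. measure_pmf (bernoulli_pmf p))"

text \<open>A (possibly randomized) look-ahead policy with window w: a probability measure
  Q on a real-valued random seed (independent of the arrivals), and action functions
  A tau e s.\<close>

definition is_policy ::
  "real \<Rightarrow> nat \<Rightarrow> (nat \<Rightarrow> (nat \<Rightarrow> bool) \<Rightarrow> real \<Rightarrow> real) \<Rightarrow> real measure \<Rightarrow> bool" where
  "is_policy B w A Q \<longleftrightarrow>
     prob_space Q \<and> sets Q = sets borel \<and>
     (\<forall>\<tau> e e' s. (\<forall>t\<in>{1..\<tau>+w}. e t = e' t) \<longrightarrow> A \<tau> e s = A \<tau> e' s) \<and>
     (\<forall>\<tau> e. (\<lambda>s. A \<tau> e s) \<in> borel_measurable Q) \<and>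
     (\<forall>\<tau>\<ge>1. \<forall>e s. 0 \<le> A \<tau> e s \<and> A \<tau> e s \<le> batt B e (\<lambda>t. A t e s) (\<tau> - 1))"

definition avg_throughput ::
  "real \<Rightarrow> real \<Rightarrow> (nat \<Rightarrow> (nat \<Rightarrow> bool) \<Rightarrow> real \<Rightarrow> real) \<Rightarrow> real measure \<Rightarrow> nat \<Rightarrow> real" where
  "avg_throughput p \<gamma> A Q T =
     (1 / real T) * (\<integral>x. (\<Sum>\<tau>=1..T. (1/2) * log 2 (1 + \<gamma> * A \<tau> (fst x) (snd x)))
                          \<partial>(arrivals_measure p \<Otimes>\<^sub>M Q))"

definition long_run_throughput ::
  "real \<Rightarrow> real \<Rightarrow> (nat \<Rightarrow> (nat \<Rightarrow> bool) \<Rightarrow> real \<Rightarrow> real) \<Rightarrow> real measure \<Rightarrow> ereal" where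
  "long_run_throughput p \<gamma> A Q = liminf (\<lambda>T. ereal (avg_throughput p \<gamma> A Q T))"

definition opt_throughput :: "real \<Rightarrow> real \<Rightarrow> real \<Rightarrow> nat \<Rightarrow> ereal" where
  "opt_throughput p \<gamma> B w =
     (SUP AQ \<in> {(A, Q). is_policy B w A Q}. long_run_throughput p \<gamma> (fst AQ) (snd AQ))"

definition first_arrival :: "nat \<Rightarrow> (nat \<Rightarrow> bool) \<Rightarrow> nat \<Rightarrow> nat" where
  "first_arrival w e \<tau> =
     (if \<exists>t\<in>{1..w}. e (\<tau> + t) then (LEAST t. 1 \<le> t \<and> e (\<tau> + t)) else 0)"

text \<open>The stationary policy determined by the function Af: battery (shifted index,
  stat_batt n = b_(n+1)) and action (stat_act n = a_(n+1)).\<close>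

fun stat_batt :: "real \<Rightarrow> nat \<Rightarrow> (real \<Rightarrow> real) \<Rightarrow> (nat \<Rightarrow> bool) \<Rightarrow> nat \<Rightarrow> real" where
  "stat_batt B w Af e 0 = B"
| "stat_batt B w Af e (Suc n) =
     (let b = stat_batt B w Af e n; d = first_arrival w e (Suc n);
          a = (if d \<noteq> 0 then b / real d else Af b)
      in min (b - a + arrival B e (Suc (Suc n))) B)"

definition stat_policy ::
  "real \<Rightarrow> nat \<Rightarrow> (real \<Rightarrow> real) \<Rightarrow> nat \<Rightarrow> (nat \<Rightarrow> bool) \<Rightarrow> real \<Rightarrow> real" where
  "stat_policy B w Af \<tau> e s =
     (let b = stat_batt B w Af e (\<tau> - 1); d = first_arrival w e \<tau>
      in if d \<noteq> 0 then b / real d else Af b)"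

text \<open>Induced sequence xi^*_j = Af(b_j), b_1 = B, b_(j+1) = b_j - xi^*_j
  (indexed from 1; xi_seq Af B 0 is unused).\<close>

fun xi_batt :: "(real \<Rightarrow> real) \<Rightarrow> real \<Rightarrow> nat \<Rightarrow> real" where
  "xi_batt Af B 0 = B"
| "xi_batt Af B (Suc n) = xi_batt Af B n - Af (xi_batt Af B n)"

definition xi_seq :: "(real \<Rightarrow> real) \<Rightarrow> real \<Rightarrow> nat \<Rightarrow> real" where
  "xi_seq Af B j = Af (xi_batt Af B (j - 1))"

definition T_inf :: "real \<Rightarrow> real \<Rightarrow> real \<Rightarrow> nat \<Rightarrow> (nat \<Rightarrow> real) \<Rightarrow> real" where
  "T_inf p \<gamma> B w x =
     (\<Sum>k=1..w. p^2 * (1-p)^(k-1) * (real k / 2) * log 2 (1 + \<gamma> * B / real k))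
   + (\<Sum>n. p * (1-p)^(Suc n + w - 1) * (1/2) * log 2 (1 + \<gamma> * x (Suc n)))
   + (\<Sum>n. p^2 * (1-p)^(Suc n + w - 1) * (real w / 2)
            * log 2 (1 + \<gamma> * (B - (\<Sum>j=1..Suc n. x j)) / real w))"

end

theory Submission
  imports Defs
begin


lemma stat_batt_Suc': "stat_batt B w Af e (Suc n) =
   min (stat_batt B w Af e n - stat_policy B w Af (Suc n) e s + arrival B e (Suc (Suc n))) B"
  by (simp add: stat_policy_def Let_def)

lemma first_arrival_eq:
  assumes "1 \<le> m" "m \<le> w + 1" "\<And>t. 1 \<le> t \<Longrightarrow> t < m \<Longrightarrow> \<not> e (\<tau> + t)" "m \<le> w \<Longrightarrow> e (\<tau> + m)"
  shows "first_arrival w e \<tau> = (if m \<le> w then m else 0)"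
proof (cases "m \<le> w")
  case True
  have ex: "\<exists>t\<in>{1..w}. e (\<tau> + t)" using True assms by auto
  have "(LEAST t. 1 \<le> t \<and> e (\<tau> + t)) = m"
  proof (rule Least_equality)
    show "1 \<le> m \<and> e (\<tau> + m)" using assms True by simp
    fix y assume "1 \<le> y \<and> e (\<tau> + y)"
    then show "m \<le> y" using assms(3)[of y] by (meson not_le)
  qed
  then show ?thesis using ex True by (simp add: first_arrival_def)
next
  case False
  then have "m = w + 1" using assms by auto
  then have "\<not> (\<exists>t\<in>{1..w}. e (\<tau> + t))" using assms(3) by auto
  then show ?thesis using False by (simp add: first_arrival_def)
qed

lemma first_arrival_le: "first_arrival w e \<tau> \<le> w"
proof -
  { assume ex: "\<exists>t\<in>{1..w}. e (\<tau> + t)"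
    then obtain t where t: "t \<in> {1..w}" "e (\<tau> + t)" by auto
    have "(LEAST t. 1 \<le> t \<and> e (\<tau> + t)) \<le> t" by (rule Least_le) (use t in auto)
    then have "(LEAST t. 1 \<le> t \<and> e (\<tau> + t)) \<le> w" using t by auto }
  then show ?thesis by (auto simp: first_arrival_def)
qed

context
  fixes B :: real and w :: nat and Af :: "real \<Rightarrow> real"
  assumes B: "0 \<le> B" and Af: "\<And>b. 0 \<le> b \<Longrightarrow> 0 \<le> Af b \<and> Af b \<le> b"
begin

lemma batt_bounds: "0 \<le> stat_batt B w Af e n \<and> stat_batt B w Af e n \<le> B"
proof (induction n)
  case 0 then show ?case using B by simp
next
  case (Suc n)
  define b where "b = stat_batt B w Af e n"
  define d where "d = first_arrival w e (Suc n)"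
  define a where "a = (if d \<noteq> 0 then b / real d else Af b)"
  have b: "0 \<le> b" "b \<le> B" using Suc b_def by auto
  have a: "0 \<le> a \<and> a \<le> b"
  proof (cases "d = 0")
    case True then show ?thesis using Af[OF b(1)] a_def by simp
  next
    case False then have "real d \<ge> 1" by simp
    then have "b / real d \<le> b" using b by (simp add: divide_le_eq mult_le_cancel_left1) 
    moreover have "0 \<le> b / real d" using b by simp
    ultimately show ?thesis using a_def False by simp
  qed
  have arr: "0 \<le> arrival B e (Suc (Suc n))" using B by (simp add: arrival_def)
  have "stat_batt B w Af e (Suc n) = min (b - a + arrival B e (Suc (Suc n))) B"
    by (simp add: b_def d_def a_def Let_def)
  then show ?case using a arr B by simp
qed

lemma policy_bounds: "0 \<le> stat_policy B w Af (Suc n) e s \<and> stat_policy B w Af (Suc n) e s \<le> stat_batt B w Af e n"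
proof -
  define b where "b = stat_batt B w Af e n"
  define d where "d = first_arrival w e (Suc n)"
  have b: "0 \<le> b" "b \<le> B" using batt_bounds b_def by auto
  have "stat_policy B w Af (Suc n) e s = (if d \<noteq> 0 then b / real d else Af b)"
    by (simp add: stat_policy_def b_def d_def)
  moreover have "0 \<le> (if d \<noteq> 0 then b / real d else Af b) \<and> (if d \<noteq> 0 then b / real d else Af b) \<le> b"
  proof (cases "d = 0")
    case True then show ?thesis using Af[OF b(1)] by simp
  next
    case False then have "real d \<ge> 1" by simp
    then have "b / real d \<le> b" using b by (simp add: divide_le_eq mult_le_cancel_left1) 
    moreover have "0 \<le> b / real d" using b by simp
    ultimately show ?thesis using False by simp
  qed
  ultimately show ?thesis by (simp add: b_def)
qed

lemma xi_batt_bounds: "0 \<le> xi_batt Af B n \<and> xi_batt Af B n \<le> B"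
proof (induction n)
  case 0 then show ?case using B by simp
next
  case (Suc n) then show ?case using Af[of "xi_batt Af B n"] by simp
qed

definition cK :: "nat \<Rightarrow> real" where
  "cK K = xi_batt Af B (K - w) / real (min K w)"

definition Aset :: "nat \<Rightarrow> nat \<Rightarrow> nat \<Rightarrow> nat set" where
  "Aset n i m = (if i < n then {n + 1 - i} else {}) \<union> (if m \<le> w then {n + 1 + m} else {})"

definition Cset :: "nat \<Rightarrow> nat \<Rightarrow> nat \<Rightarrow> nat set" where
  "Cset n i m = {n + 2 - i..<n + 1 + m}"

definition Ev :: "nat \<Rightarrow> nat \<Rightarrow> nat \<Rightarrow> (nat \<Rightarrow> bool) \<Rightarrow> bool" where
  "Ev n i m e \<longleftrightarrow> (\<forall>t\<in>Aset n i m. e t) \<and> (\<forall>t\<in>Cset n i m. \<not> e t)"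

lemma cK_nonneg: "0 \<le> cK K"
  using xi_batt_bounds[of "K - w"] by (simp add: cK_def)

lemma cK_bound: assumes "m \<le> K" "m \<le> w" shows "cK K * real m \<le> B"
proof (cases "m = 0")
  case True then show ?thesis using B by simp
next
  case False
  then have mn: "real m \<le> real (min K w)" "real (min K w) > 0" using assms by auto
  have "cK K * real m \<le> cK K * real (min K w)"
    using mn cK_nonneg by (simp add: mult_left_mono)
  also have "\<dots> = xi_batt Af B (K - w)" using mn by (simp add: cK_def)
  also have "\<dots> \<le> B" using xi_batt_bounds by simp
  finally show ?thesis .
qed

lemma cK_le: assumes "K \<le> w" "1 \<le> K" shows "cK K * real K = B"
  using assms by (simp add: cK_def)

lemma cK_ge: assumes "1 \<le> w" shows "cK (i + w) * real w = xi_batt Af B i"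
  using assms by (simp add: cK_def)

lemma batt_inv:
  assumes w1: "1 \<le> w"
  shows "i \<le> n \<Longrightarrow> 1 \<le> m \<Longrightarrow> m \<le> w + 1 \<Longrightarrow> Ev n i m e \<Longrightarrow>
    stat_batt B w Af e n = (if m \<le> w then cK (i + m) * real m else xi_batt Af B i)"
proof (induction n arbitrary: i m)
  case 0
  then show ?case using cK_le[of m] by simp
next
  case (Suc n)
  show ?case
  proof (cases "i = 0")
    case True
    have e2: "e (Suc (Suc n))" using Suc.prems True by (auto simp: Ev_def Aset_def)
    have pb: "0 \<le> stat_policy B w Af (Suc n) e 0 \<and> stat_policy B w Af (Suc n) e 0 \<le> stat_batt B w Af e n"
      by (rule policy_bounds)
    have "stat_batt B w Af e (Suc n) = B"
      unfolding stat_batt_Suc'[where s=0] using e2 pb by (simp add: arrival_def)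
    then show ?thesis using True Suc.prems cK_le[of m] by simp
  next
    case False
    define m' where "m' = (if m < w then m + 1 else w + 1)"
    have ev: "Ev n (i - 1) m' e"
      using Suc.prems False unfolding Ev_def Aset_def Cset_def m'_def
      by (auto split: if_splits)
    have m'b: "1 \<le> m'" "m' \<le> w + 1" by (auto simp: m'_def)
    have IH: "stat_batt B w Af e n = (if m' \<le> w then cK (i - 1 + m') * real m' else xi_batt Af B (i - 1))"
      using Suc.IH[OF _ m'b ev] Suc.prems by simp
    have fa: "first_arrival w e (Suc n) = (if m' \<le> w then m' else 0)"
    proof (rule first_arrival_eq[OF m'b])
      fix t assume "1 \<le> t" "t < m'"
      then show "\<not> e (Suc n + t)" using Suc.prems False unfolding Ev_def Cset_def m'_def
        by (auto split: if_splits)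
    next
      assume "m' \<le> w" then show "e (Suc n + m')" using Suc.prems unfolding Ev_def Aset_def m'_def
        by (auto split: if_splits)
    qed
    have arr: "arrival B e (Suc (Suc n)) = 0"
      using Suc.prems False unfolding Ev_def Cset_def arrival_def by auto
    have sb: "stat_batt B w Af e (Suc n) = min (stat_batt B w Af e n - stat_policy B w Af (Suc n) e 0) B"
      unfolding stat_batt_Suc'[where s=0] arr by simp
    have pol: "stat_policy B w Af (Suc n) e 0 = (if m' \<le> w then stat_batt B w Af e n / real m' else Af (stat_batt B w Af e n))"
      using fa m'b by (simp add: stat_policy_def Let_def)
    show ?thesis
    proof (cases "m < w")
      case True
      then have mm: "m' = m + 1" "m' \<le> w" by (auto simp: m'_def)
      have "i - 1 + m' = i + m" using False mm by simp
      then have b: "stat_batt B w Af e n = cK (i + m) * (real m + 1)" using IH mm by simp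
      have nz: "1 + real m \<noteq> 0" by linarith
      have "stat_policy B w Af (Suc n) e 0 = cK (i + m)" using pol b mm nz by (simp add: add.commute)
      then have "stat_batt B w Af e n - stat_policy B w Af (Suc n) e 0 = cK (i + m) * real m"
        using b by (simp add: algebra_simps)
      moreover have "cK (i + m) * real m \<le> B" using cK_bound[of m "i + m"] True by simp
      ultimately show ?thesis using sb True by simp
    next
      case nt: False
      then have mm: "\<not> m' \<le> w" by (auto simp: m'_def)
      have b: "stat_batt B w Af e n = xi_batt Af B (i - 1)" using IH mm by simp
      have "stat_batt B w Af e n - stat_policy B w Af (Suc n) e 0 = xi_batt Af B i"
        using pol b mm False by (cases i) auto
      then have "stat_batt B w Af e (Suc n) = xi_batt Af B i"
        using sb xi_batt_bounds[of i] by simp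
      moreover have "m \<le> w \<Longrightarrow> cK (i + m) * real m = xi_batt Af B i"
        using nt cK_ge[OF w1, of i] by simp
      ultimately show ?thesis by simp
    qed
  qed
qed

lemma policy_val:
  assumes w1: "1 \<le> w" and "i \<le> n" "1 \<le> m" "m \<le> w + 1" "Ev n i m e"
  shows "stat_policy B w Af (Suc n) e s = (if m \<le> w then cK (i + m) else Af (xi_batt Af B i))"
proof -
  have b: "stat_batt B w Af e n = (if m \<le> w then cK (i + m) * real m else xi_batt Af B i)"
    by (rule batt_inv[OF assms])
  have fa: "first_arrival w e (Suc n) = (if m \<le> w then m else 0)"
  proof (rule first_arrival_eq)
    fix t assume "1 \<le> t" "t < m"
    then show "\<not> e (Suc n + t)" using assms unfolding Ev_def Cset_def by auto
  next
    assume "m \<le> w" then show "e (Suc n + m)" using assms unfolding Ev_def Aset_def by auto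
  qed (use assms in auto)
  show ?thesis using b fa assms by (simp add: stat_policy_def Let_def)
qed

lemma age_exists: "\<exists>i\<le>(n::nat). (i < n \<longrightarrow> e (n + 1 - i)) \<and> (\<forall>t. n + 2 - i \<le> t \<longrightarrow> t \<le> n + 1 \<longrightarrow> \<not> e t)"
proof (induction n)
  case 0 then show ?case by auto
next
  case (Suc n)
  show ?case
  proof (cases "e (n + 2)")
    case True then show ?thesis by (intro exI[of _ 0]) auto
  next
    case False
    from Suc obtain i where i: "i \<le> n" "i < n \<longrightarrow> e (n + 1 - i)" "\<forall>t. n + 2 - i \<le> t \<longrightarrow> t \<le> n + 1 \<longrightarrow> \<not> e t"
      by blast
    show ?thesis
    proof (intro exI[of _ "Suc i"] conjI allI impI)
      show "Suc i \<le> Suc n" using i by simp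
      show "e (Suc n + 1 - Suc i)" if "Suc i < Suc n" using i that by simp
      fix t assume "Suc n + 2 - Suc i \<le> t" "t \<le> Suc n + 1"
      then show "\<not> e t" using i False by (cases "t = n + 2") auto
    qed
  qed
qed

lemma Ev_exists: "\<exists>i\<le>n. \<exists>m. 1 \<le> m \<and> m \<le> w + 1 \<and> Ev n i m e"
proof -
  obtain i where i: "i \<le> n" "i < n \<longrightarrow> e (n + 1 - i)" "\<forall>t. n + 2 - i \<le> t \<longrightarrow> t \<le> n + 1 \<longrightarrow> \<not> e t"
    using age_exists by blast
  define P where "P m \<longleftrightarrow> 1 \<le> m \<and> (m = w + 1 \<or> e (n + 1 + m))" for m
  define m0 where "m0 = (LEAST m. P m)"
  have Pw: "P (w + 1)" by (simp add: P_def)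
  have Pm0: "P m0" unfolding m0_def by (rule LeastI[of P, OF Pw])
  have m0le: "m0 \<le> w + 1" unfolding m0_def by (rule Least_le[of P, OF Pw])
  have notP: "\<not> P k" if "k < m0" for k using not_less_Least[of k P] that by (simp add: m0_def)
  have "Ev n i m0 e"
    unfolding Ev_def Aset_def Cset_def
  proof (intro conjI ballI)
    fix t assume t: "t \<in> (if i < n then {n + 1 - i} else {}) \<union> (if m0 \<le> w then {n + 1 + m0} else {})"
    then show "e t" using i Pm0 by (auto simp: P_def split: if_splits)
  next
    fix t assume t: "t \<in> {n + 2 - i..<n + 1 + m0}"
    show "\<not> e t"
    proof (cases "t \<le> n + 1")
      case True then show ?thesis using i t by auto
    next
      case False
      define k where "k = t - (n + 1)"
      have k: "t = n + 1 + k" "1 \<le> k" using False by (auto simp: k_def)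
      then have "k < m0" using t by auto
      then have "\<not> P k" by (rule notP)
      then show ?thesis using k \<open>k < m0\<close> m0le by (auto simp: P_def)
    qed
  qed
  moreover have "1 \<le> m0" using Pm0 by (simp add: P_def)
  ultimately show ?thesis using i m0le by blast
qed

lemma Ev_unique:
  assumes "i \<le> n" "1 \<le> m" "m \<le> w + 1" "Ev n i m e" "i' \<le> n" "1 \<le> m'" "m' \<le> w + 1" "Ev n i' m' e"
  shows "i = i' \<and> m = m'"
proof -
  have 1: False if "Ev n i m e" "Ev n i' m' e" "i < i'" "i' \<le> n" "1 \<le> m'" for i i' m m'
  proof -
    have "e (n + 1 - i)" using that unfolding Ev_def Aset_def by auto
    moreover have "n + 1 - i \<in> Cset n i' m'" using that unfolding Cset_def by auto
    ultimately show False using that unfolding Ev_def by auto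
  qed
  have 2: False if "Ev n i m e" "Ev n i m' e" "m < m'" "m' \<le> w + 1" "1 \<le> m" for m m'
  proof -
    have "e (n + 1 + m)" using that unfolding Ev_def Aset_def by auto
    moreover have "n + 1 + m \<in> Cset n i m'" using that unfolding Cset_def by auto
    ultimately show False using that unfolding Ev_def by auto
  qed
  have "i = i'" using 1[OF assms(4) assms(8)] 1[OF assms(8) assms(4)] assms by (metis linorder_neqE_nat)
  moreover have "m = m'" using 2[of m m'] 2[of m' m] assms \<open>i = i'\<close> by (metis linorder_neqE_nat)
  ultimately show ?thesis by simp
qed

definition hh :: "real \<Rightarrow> nat \<Rightarrow> nat \<Rightarrow> real" where
  "hh \<gamma> i m = (1/2) * log 2 (1 + \<gamma> * (if m \<le> w then cK (i + m) else Af (xi_batt Af B i)))"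

lemma reward_repr:
  assumes w1: "1 \<le> w"
  shows "(1/2) * log 2 (1 + \<gamma> * stat_policy B w Af (Suc n) e s) =
    (\<Sum>i\<le>n. \<Sum>m\<in>{1..w+1}. indicator {e. Ev n i m e} e * hh \<gamma> i m)"
proof -
  obtain i0 m0 where 0: "i0 \<le> n" "1 \<le> m0" "m0 \<le> w + 1" "Ev n i0 m0 e" using Ev_exists by blast
  have "(\<Sum>i\<le>n. \<Sum>m\<in>{1..w+1}. indicator {e. Ev n i m e} e * hh \<gamma> i m) =
        (\<Sum>i\<le>n. \<Sum>m\<in>{1..w+1}. (if m = m0 then (if i = i0 then hh \<gamma> i0 m0 else 0) else 0))"
  proof (intro sum.cong refl)
    fix i m assume im: "i \<in> {..n}" "m \<in> {1..w+1}"
    show "indicator {e. Ev n i m e} e * hh \<gamma> i m = (if m = m0 then (if i = i0 then hh \<gamma> i0 m0 else 0) else 0)"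
    proof (cases "Ev n i m e")
      case True
      then have "i0 = i \<and> m0 = m" using Ev_unique[OF 0, of i m] im by auto
      then show ?thesis using True by simp
    next
      case False
      then have "\<not> (i = i0 \<and> m = m0)" using 0 by auto
      then show ?thesis using False by (auto simp: indicator_def)
    qed
  qed
  also have "\<dots> = (\<Sum>i\<le>n. if i = i0 then hh \<gamma> i0 m0 else 0)"
    unfolding sum.delta[OF finite_atLeastAtMost] using 0 by simp
  also have "\<dots> = hh \<gamma> i0 m0"
    unfolding sum.delta[OF finite_atMost] using 0 by simp
  also have "\<dots> = (1/2) * log 2 (1 + \<gamma> * stat_policy B w Af (Suc n) e s)"
    using policy_val[OF w1 0] by (simp add: hh_def)
  finally show ?thesis by simp
qed

end


lemma cyl_set_eq:
  assumes "A \<inter> C = {}"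
  shows "{e::nat\<Rightarrow>bool. (\<forall>t\<in>A. e t) \<and> (\<forall>t\<in>C. \<not> e t)} =
   prod_emb UNIV (\<lambda>_. measure_pmf (bernoulli_pmf p)) (A \<union> C) (\<Pi>\<^sub>E t\<in>A \<union> C. if t \<in> A then {True} else {False})"
  using assms by (auto simp: prod_emb_def PiE_iff split: if_splits; blast)

lemma cyl_sets:
  assumes "finite A" "finite C" "A \<inter> C = {}"
  shows "{e::nat\<Rightarrow>bool. (\<forall>t\<in>A. e t) \<and> (\<forall>t\<in>C. \<not> e t)} \<in> sets (arrivals_measure p)"
  unfolding cyl_set_eq[OF assms(3), of p] arrivals_measure_def
  by (rule sets_PiM_I) (use assms in auto)

lemma cyl_prob:
  assumes p: "0 \<le> p" "p \<le> 1" and fin: "finite A" "finite C" and dis: "A \<inter> C = {}"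
  shows "measure (arrivals_measure p) {e::nat\<Rightarrow>bool. (\<forall>t\<in>A. e t) \<and> (\<forall>t\<in>C. \<not> e t)} = p ^ card A * (1 - p) ^ card C"
proof -
  interpret P: product_prob_space "\<lambda>_::nat. measure_pmf (bernoulli_pmf p)" UNIV
    by unfold_locales
  have "measure (arrivals_measure p) {e::nat\<Rightarrow>bool. (\<forall>t\<in>A. e t) \<and> (\<forall>t\<in>C. \<not> e t)} =
     (\<Prod>t\<in>A \<union> C. measure (measure_pmf (bernoulli_pmf p)) (if t \<in> A then {True} else {False}))"
    unfolding cyl_set_eq[OF dis, of p] arrivals_measure_def
    by (rule P.measure_PiM_emb) (use fin in auto)
  also have "\<dots> = (\<Prod>t\<in>A. measure (measure_pmf (bernoulli_pmf p)) (if t \<in> A then {True} else {False})) *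
       (\<Prod>t\<in>C. measure (measure_pmf (bernoulli_pmf p)) (if t \<in> A then {True} else {False}))"
    by (rule prod.union_disjoint) (use fin dis in auto)
  also have "\<dots> = (\<Prod>t\<in>A. p) * (\<Prod>t\<in>C. 1 - p)"
    using dis p by (intro arg_cong2[where f="(*)"] prod.cong refl) (auto simp: measure_pmf_single)
  also have "\<dots> = p ^ card A * (1 - p) ^ card C" by simp
  finally show ?thesis .
qed

lemma prob_space_arr: "prob_space (arrivals_measure p)"
  unfolding arrivals_measure_def by (intro prob_space_PiM measure_pmf.prob_space_axioms)

lemma space_arr: "space (arrivals_measure p) = UNIV"
  by (simp add: arrivals_measure_def space_PiM PiE_UNIV_domain)



lemma sum_1_T: "(\<Sum>\<tau>=1..T. f \<tau>) = (\<Sum>n<T. f (Suc n) :: real)"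
  by (induction T) (auto simp: atLeastAtMostSuc_conv)

lemma geo_fin: "(\<Sum>m\<in>{1..w}. p * (1 - p) ^ (m - 1)) = 1 - (1 - p) ^ w" for p :: real
  by (induction w) (auto simp: atLeastAtMostSuc_conv algebra_simps)

lemma tri_sum: "(\<Sum>m\<in>{1..w}. \<Sum>i<w+1-m. G (i + m)) = (\<Sum>k\<in>{1..w}. real k * G k :: real)"
proof (induction w)
  case 0 then show ?case by simp
next
  case (Suc w)
  have a: "(\<Sum>m\<in>{1..Suc w}. \<Sum>i<Suc w+1-m. G (i + m)) = (\<Sum>m\<in>{1..w}. \<Sum>i<Suc w+1-m. G (i + m)) + G (Suc w)"
    by (simp add: atLeastAtMostSuc_conv add.commute)
  have b: "(\<Sum>m\<in>{1..w}. \<Sum>i<Suc w+1-m. G (i + m)) = (\<Sum>m\<in>{1..w}. (\<Sum>i<w+1-m. G (i + m)) + G (Suc w))"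
  proof (intro sum.cong refl)
    fix m assume m: "m \<in> {1..w}"
    then have "Suc w + 1 - m = Suc (w + 1 - m)" by auto
    moreover have "w + 1 - m + m = Suc w" using m by auto
    ultimately show "(\<Sum>i<Suc w+1-m. G (i + m)) = (\<Sum>i<w+1-m. G (i + m)) + G (Suc w)" by simp
  qed
  show ?case unfolding a b sum.distrib Suc.IH by (simp add: atLeastAtMostSuc_conv algebra_simps)
qed

lemma double_sum:
  assumes "\<And>m. 1 \<le> m \<Longrightarrow> summable (\<lambda>i. G (i + m))"
  shows "(\<Sum>i. \<Sum>m\<in>{1..w}. G (i + m)) = (\<Sum>k\<in>{1..w}. real k * G k) + real w * (\<Sum>n. G (n + w + 1) :: real)"
proof -
  have "(\<Sum>i. \<Sum>m\<in>{1..w}. G (i + m)) = (\<Sum>m\<in>{1..w}. \<Sum>i. G (i + m))"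
    by (rule suminf_sum) (use assms in auto)
  also have "\<dots> = (\<Sum>m\<in>{1..w}. (\<Sum>n. G (n + w + 1)) + (\<Sum>i<w+1-m. G (i + m)))"
  proof (intro sum.cong refl)
    fix m assume m: "m \<in> {1..w}"
    have "(\<Sum>i. G (i + m)) = (\<Sum>n. G (n + (w + 1 - m) + m)) + (\<Sum>i<w+1-m. G (i + m))"
      by (rule suminf_split_initial_segment) (use assms m in auto)
    moreover have "\<And>n. n + (w + 1 - m) + m = n + w + 1" using m by auto
    ultimately show "(\<Sum>i. G (i + m)) = (\<Sum>n. G (n + w + 1)) + (\<Sum>i<w+1-m. G (i + m))" by simp
  qed
  also have "\<dots> = (\<Sum>m\<in>{1..w}. (\<Sum>n. G (n + w + 1))) + (\<Sum>m\<in>{1..w}. \<Sum>i<w+1-m. G (i + m))"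
    by (rule sum.distrib)
  also have "\<dots> = real w * (\<Sum>n. G (n + w + 1)) + (\<Sum>k\<in>{1..w}. real k * G k)"
    unfolding tri_sum by simp
  finally show ?thesis by simp
qed

lemma xi_batt_sum: "xi_batt Af B n = B - (\<Sum>j=1..n. xi_seq Af B j)"
  by (induction n) (auto simp: xi_seq_def)

context
  fixes p \<gamma> B :: real and w :: nat and Af :: "real \<Rightarrow> real"
  assumes p0: "0 < p" and p1: "p < 1" and g0: "0 < \<gamma>" and B0: "0 < B" and w1: "1 \<le> w"
    and Af: "\<And>b. 0 \<le> b \<Longrightarrow> 0 \<le> Af b \<and> Af b \<le> b"
begin

abbreviation "M \<equiv> arrivals_measure p"
abbreviation "h \<equiv> hh B w Af \<gamma>"

lemma B0': "0 \<le> B" using B0 by simp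

lemma Ev_set: "{e. Ev w n i m e} = {e. (\<forall>t\<in>Aset w n i m. e t) \<and> (\<forall>t\<in>Cset n i m. \<not> e t)}"
  using Ev_def[OF B0' Af] by simp

lemma AC_props:
  assumes "i \<le> n" "1 \<le> m"
  shows "finite (Aset w n i m)" "finite (Cset n i m)" "Aset w n i m \<inter> Cset n i m = {}"
    "card (Aset w n i m) = (if i < n then 1 else 0) + (if m \<le> w then 1 else 0)"
    "card (Cset n i m) = i + m - 1"
  using assms by (auto simp: Aset_def[OF B0' Af] Cset_def[OF B0' Af])

lemma Ev_sets: "i \<le> n \<Longrightarrow> 1 \<le> m \<Longrightarrow> {e. Ev w n i m e} \<in> sets M"
  unfolding Ev_set by (rule cyl_sets) (use AC_props in auto)

lemma Ev_prob: "i \<le> n \<Longrightarrow> 1 \<le> m \<Longrightarrow> measure M {e. Ev w n i m e} =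
    (if i < n then p else 1) * (if m \<le> w then p else 1) * (1 - p) ^ (i + m - 1)"
  unfolding Ev_set using p0 p1
  by (subst cyl_prob) (use AC_props in \<open>auto simp: power_add\<close>)

definition v :: "nat \<Rightarrow> real" where
  "v i = (\<Sum>m\<in>{1..w}. p * (1 - p) ^ (m - 1) * h i m) + (1 - p) ^ w * h i (w + 1)"

definition Er :: "nat \<Rightarrow> real" where
  "Er n = (\<Sum>i\<le>n. (if i < n then p else 1) * (1 - p) ^ i * v i)"

lemma reward_repr': "(1/2) * log 2 (1 + \<gamma> * stat_policy B w Af (Suc n) e s) =
    (\<Sum>i\<le>n. \<Sum>m\<in>{1..w+1}. indicator {e. Ev w n i m e} e * h i m)"
  by (rule reward_repr[OF B0' Af w1])

lemma integrable_ind: "i \<le> n \<Longrightarrow> 1 \<le> m \<Longrightarrow> integrable M (\<lambda>e. indicator {e. Ev w n i m e} e * (c::real))"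
proof -
  assume a: "i \<le> n" "1 \<le> m"
  interpret prob_space M by (rule prob_space_arr)
  have "integrable M (indicator {e. Ev w n i m e} :: _ \<Rightarrow> real)"
    by (rule integrable_real_indicator[OF Ev_sets[OF a]]) (simp add: less_top[symmetric])
  then show ?thesis by (rule integrable_mult_left)
qed

lemma integral_ind: "i \<le> n \<Longrightarrow> 1 \<le> m \<Longrightarrow> (\<integral>e. indicator {e. Ev w n i m e} e * (c::real) \<partial>M) = measure M {e. Ev w n i m e} * c"
  by (simp add: space_arr)

lemma integrable_repr: "integrable M (\<lambda>e. \<Sum>i\<le>n. \<Sum>m\<in>{1..w+1}. indicator {e. Ev w n i m e} e * h i m)"
proof -
  interpret prob_space M by (rule prob_space_arr)
  show ?thesis
    by (intro Bochner_Integration.integrable_sum integrable_ind) auto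
qed

lemma integral_repr: "(\<integral>e. (\<Sum>i\<le>n. \<Sum>m\<in>{1..w+1}. indicator {e. Ev w n i m e} e * h i m) \<partial>M) = Er n"
proof -
  interpret prob_space M by (rule prob_space_arr)
  have "(\<integral>e. (\<Sum>i\<le>n. \<Sum>m\<in>{1..w+1}. indicator {e. Ev w n i m e} e * h i m) \<partial>M) =
     (\<Sum>i\<le>n. \<Sum>m\<in>{1..w+1}. measure M {e. Ev w n i m e} * h i m)"
    apply (subst Bochner_Integration.integral_sum)
     apply (intro Bochner_Integration.integrable_sum integrable_ind; auto)
    apply (intro sum.cong refl)
    apply (subst Bochner_Integration.integral_sum)
     apply (intro integrable_ind; auto)
    apply (intro sum.cong refl)
    apply (rule integral_ind; auto)
    done
  also have "\<dots> = (\<Sum>i\<le>n. \<Sum>m\<in>{1..w+1}. (if i < n then p else 1) * (1 - p) ^ i * ((if m \<le> w then p else 1) * (1 - p) ^ (m - 1) * h i m))"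
    by (intro sum.cong refl) (auto simp: Ev_prob power_add[symmetric])
  also have "\<dots> = Er n"
    unfolding Er_def v_def
  proof (intro sum.cong refl)
    fix i
    have "(\<Sum>m\<in>{1..w+1}. (if m \<le> w then p else 1) * (1 - p) ^ (m - 1) * h i m) =
       (\<Sum>m\<in>{1..w}. p * (1 - p) ^ (m - 1) * h i m) + (1 - p) ^ w * h i (w + 1)"
      by (simp add: atLeastAtMostSuc_conv add.commute)
    then show "(\<Sum>m\<in>{1..w+1}. (if i < n then p else 1) * (1 - p) ^ i * ((if m \<le> w then p else 1) * (1 - p) ^ (m - 1) * h i m)) =
      (if i < n then p else 1) * (1 - p) ^ i * ((\<Sum>m\<in>{1..w}. p * (1 - p) ^ (m - 1) * h i m) + (1 - p) ^ w * h i (w + 1))"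
      by (simp add: sum_distrib_left[symmetric])
  qed
  finally show ?thesis .
qed

lemma avg_eq: "avg_throughput p \<gamma> (stat_policy B w Af) (return borel 0) T = (1 / real T) * (\<Sum>n<T. Er n)"
proof -
  interpret prob_space M by (rule prob_space_arr)
  define f where "f e = (\<Sum>n<T. \<Sum>i\<le>n. \<Sum>m\<in>{1..w+1}. indicator {e. Ev w n i m e} e * h i m)" for e
  have fi: "integrable M f" unfolding f_def by (intro Bochner_Integration.integrable_sum integrable_repr)
  have eq: "(\<lambda>x. \<Sum>\<tau>=1..T. (1/2) * log 2 (1 + \<gamma> * stat_policy B w Af \<tau> (fst x) (snd x))) = f \<circ> fst"
  proof
    fix x :: "(nat \<Rightarrow> bool) \<times> real"
    show "(\<Sum>\<tau>=1..T. (1/2) * log 2 (1 + \<gamma> * stat_policy B w Af \<tau> (fst x) (snd x))) = (f \<circ> fst) x"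
      unfolding sum_1_T f_def o_def reward_repr' ..
  qed
  have "(\<integral>x. (\<Sum>\<tau>=1..T. (1/2) * log 2 (1 + \<gamma> * stat_policy B w Af \<tau> (fst x) (snd x))) \<partial>(M \<Otimes>\<^sub>M return borel 0))
      = (\<integral>x. f (fst x) \<partial>(M \<Otimes>\<^sub>M return borel (0::real)))" by (simp only: eq o_def)
  also have "\<dots> = integral\<^sup>L (distr (M \<Otimes>\<^sub>M return borel (0::real)) M fst) f"
    by (rule integral_distr[symmetric]) (auto intro: borel_measurable_integrable[OF fi])
  also have "distr (M \<Otimes>\<^sub>M return borel (0::real)) M fst = M"
    by (rule prob_space.distr_pair_fst) (auto intro: prob_space_return)
  also have "integral\<^sup>L M f = (\<Sum>n<T. Er n)"
    unfolding f_def Bochner_Integration.integral_sum[OF integrable_repr] integral_repr ..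
  finally show ?thesis by (simp add: avg_throughput_def)
qed

definition H :: real where "H = (1/2) * log 2 (1 + \<gamma> * B)"

lemma hlog: assumes "0 \<le> x" "x \<le> B" shows "0 \<le> (1/2) * log 2 (1 + \<gamma> * x) \<and> (1/2) * log 2 (1 + \<gamma> * x) \<le> H"
proof -
  have a: "1 \<le> 1 + \<gamma> * x" using assms g0 by simp
  have b: "1 + \<gamma> * x \<le> 1 + \<gamma> * B" using assms g0 by (simp add: mult_left_mono)
  have "0 \<le> log 2 (1 + \<gamma> * x)" using a by simp
  moreover have "log 2 (1 + \<gamma> * x) \<le> log 2 (1 + \<gamma> * B)" using a b by simp
  ultimately show ?thesis by (simp add: H_def)
qed

lemma h_bounds: assumes "1 \<le> m" shows "0 \<le> h i m \<and> h i m \<le> H"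
proof (cases "m \<le> w")
  case True
  have "0 \<le> cK B w Af (i + m)" by (rule cK_nonneg[OF B0' Af])
  moreover have "cK B w Af (i + m) * real 1 \<le> B" by (rule cK_bound[OF B0' Af]) (use assms w1 in auto)
  ultimately show ?thesis using hlog[of "cK B w Af (i + m)"] True by (simp add: hh_def[OF B0' Af])
next
  case False
  have "0 \<le> xi_batt Af B i \<and> xi_batt Af B i \<le> B" by (rule xi_batt_bounds[OF B0' Af])
  then have "0 \<le> Af (xi_batt Af B i) \<and> Af (xi_batt Af B i) \<le> B" using Af[of "xi_batt Af B i"] by auto
  then show ?thesis using hlog[of "Af (xi_batt Af B i)"] False by (simp add: hh_def[OF B0' Af])
qed

lemma H_nonneg: "0 \<le> H" using h_bounds[of 1 0] by simp

lemma v_bounds: "0 \<le> v i \<and> v i \<le> H"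
proof -
  have q: "0 \<le> 1 - p" "0 \<le> p" using p0 p1 by auto
  have "(\<Sum>m\<in>{1..w}. p * (1 - p) ^ (m - 1) * h i m) \<le> (\<Sum>m\<in>{1..w}. p * (1 - p) ^ (m - 1) * H)"
    using h_bounds q by (intro sum_mono mult_left_mono) auto
  also have "\<dots> = (\<Sum>m\<in>{1..w}. p * (1 - p) ^ (m - 1)) * H" by (rule sum_distrib_right[symmetric])
  also have "\<dots> = (1 - (1 - p) ^ w) * H" by (simp only: geo_fin)
  finally have 1: "(\<Sum>m\<in>{1..w}. p * (1 - p) ^ (m - 1) * h i m) \<le> (1 - (1 - p) ^ w) * H" .
  have 2: "(1 - p) ^ w * h i (w + 1) \<le> (1 - p) ^ w * H"
    using h_bounds[of "w+1" i] q by (intro mult_left_mono) auto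
  have 3: "0 \<le> (\<Sum>m\<in>{1..w}. p * (1 - p) ^ (m - 1) * h i m)"
    using h_bounds q by (intro sum_nonneg) auto
  have 4: "0 \<le> (1 - p) ^ w * h i (w + 1)" using h_bounds[of "w+1" i] q by simp
  show ?thesis using 1 2 3 4 unfolding v_def by (simp add: algebra_simps)
qed

definition u :: "nat \<Rightarrow> real" where "u i = p * (1 - p) ^ i * v i"

lemma Er_alt: "Er n = (\<Sum>i<n. u i) + (1 - p) ^ n * v n"
proof -
  have "Er n = (\<Sum>i<Suc n. (if i < n then p else 1) * (1 - p) ^ i * v i)"
    unfolding Er_def lessThan_Suc_atMost ..
  also have "\<dots> = (\<Sum>i<n. (if i < n then p else 1) * (1 - p) ^ i * v i) + (1 - p) ^ n * v n" by simp
  also have "(\<Sum>i<n. (if i < n then p else 1) * (1 - p) ^ i * v i) = (\<Sum>i<n. u i)"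
    by (intro sum.cong refl) (simp add: u_def)
  finally show ?thesis .
qed

lemma u_bounds: "0 \<le> u i \<and> u i \<le> p * H * (1 - p) ^ i"
  using v_bounds[of i] p0 p1 unfolding u_def
  by (auto intro!: mult_nonneg_nonneg simp: mult_left_mono algebra_simps)

lemma summable_geo': "summable (\<lambda>i. c * (1 - p) ^ i)"
  using p0 p1 by (intro summable_mult summable_geometric) auto

lemma suminf_geo': "(\<Sum>i. c * (1 - p) ^ i) = c / p"
  using p0 p1 by (subst suminf_mult) (auto simp: suminf_geometric)

lemma summable_u: "summable u"
  by (rule summable_comparison_test[OF _ summable_geo'[of "p * H"]]) (use u_bounds in auto)

definition L :: real where "L = suminf u"

lemma Er_close: "\<bar>Er n - L\<bar> \<le> H * (1 - p) ^ n"
proof -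
  have sp: "L = (\<Sum>j. u (j + n)) + (\<Sum>i<n. u i)"
    unfolding L_def by (rule suminf_split_initial_segment[OF summable_u])
  have st: "summable (\<lambda>j. u (j + n))" using summable_u by (rule summable_ignore_initial_segment)
  have t0: "0 \<le> (\<Sum>j. u (j + n))" using st u_bounds by (intro suminf_nonneg) auto
  have ub: "u (j + n) \<le> p * H * (1 - p) ^ n * (1 - p) ^ j" for j
  proof -
    have "u (j + n) \<le> p * H * (1 - p) ^ (j + n)" using u_bounds[of "j + n"] by simp
    also have "\<dots> = p * H * (1 - p) ^ n * (1 - p) ^ j" by (simp add: power_add)
    finally show ?thesis .
  qed
  have "(\<Sum>j. u (j + n)) \<le> (\<Sum>j. p * H * (1 - p) ^ n * (1 - p) ^ j)"
    by (rule suminf_le[OF ub st summable_geo'])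
  also have "\<dots> = H * (1 - p) ^ n" using suminf_geo' p0 by simp
  finally have t1: "(\<Sum>j. u (j + n)) \<le> H * (1 - p) ^ n" .
  have a0: "0 \<le> (1 - p) ^ n * v n" using v_bounds p1 by simp
  have a1: "(1 - p) ^ n * v n \<le> H * (1 - p) ^ n"
    using v_bounds[of n] p1 by (simp add: mult.commute mult_left_mono)
  have "Er n - L = (1 - p) ^ n * v n - (\<Sum>j. u (j + n))" using sp Er_alt by simp
  then show ?thesis using t0 t1 a0 a1 by linarith
qed

lemma avg_tendsto: "(\<lambda>T. avg_throughput p \<gamma> (stat_policy B w Af) (return borel 0) T) \<longlonglongrightarrow> L"
proof -
  have bound: "\<bar>avg_throughput p \<gamma> (stat_policy B w Af) (return borel 0) T - L\<bar> \<le> (H / p) / real T"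
    if T: "T \<ge> 1" for T
  proof -
    have Tpos: "real T > 0" using T by simp
    have "avg_throughput p \<gamma> (stat_policy B w Af) (return borel 0) T - L = (1 / real T) * (\<Sum>n<T. Er n - L)"
      using Tpos by (simp add: avg_eq sum_subtractf field_simps)
    then have "\<bar>avg_throughput p \<gamma> (stat_policy B w Af) (return borel 0) T - L\<bar> = (1 / real T) * \<bar>\<Sum>n<T. Er n - L\<bar>"
      using Tpos by (simp add: abs_mult)
    also have "\<dots> \<le> (1 / real T) * (\<Sum>n<T. H * (1 - p) ^ n)"
    proof (intro mult_left_mono)
      show "\<bar>\<Sum>n<T. Er n - L\<bar> \<le> (\<Sum>n<T. H * (1 - p) ^ n)"
        by (rule order_trans[OF sum_abs]) (intro sum_mono Er_close)
    qed (use Tpos in simp)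
    also have "(\<Sum>n<T. H * (1 - p) ^ n) = H * ((1 - (1 - p) ^ T) / p)"
      using p0 by (simp add: sum_distrib_left[symmetric] sum_gp_strict)
    also have "\<dots> \<le> H / p"
      using p0 p1 H_nonneg by (simp add: divide_right_mono mult_left_le)
    finally show ?thesis using Tpos by (simp add: divide_right_mono field_simps)
  qed
  have "(\<lambda>T. avg_throughput p \<gamma> (stat_policy B w Af) (return borel 0) T - L) \<longlonglongrightarrow> 0"
  proof (rule Lim_null_comparison)
    show "\<forall>\<^sub>F T in sequentially. norm (avg_throughput p \<gamma> (stat_policy B w Af) (return borel 0) T - L) \<le> (H / p) / real T"
      using bound by (auto simp: eventually_sequentially intro!: exI[of _ 1])
    show "(\<lambda>T. (H / p) / real T) \<longlonglongrightarrow> 0" by (rule lim_const_over_n)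
  qed
  then have "(\<lambda>T. avg_throughput p \<gamma> (stat_policy B w Af) (return borel 0) T - L + L) \<longlonglongrightarrow> 0 + L"
    by (intro tendsto_add tendsto_const)
  then show ?thesis by simp
qed

lemma long_run_eq: "long_run_throughput p \<gamma> (stat_policy B w Af) (return borel 0) = ereal L"
  unfolding long_run_throughput_def
  by (rule lim_imp_Liminf) (auto intro: avg_tendsto tendsto_ereal)

definition G :: "nat \<Rightarrow> real" where
  "G K = p^2 * (1 - p) ^ (K - 1) * ((1/2) * log 2 (1 + \<gamma> * cK B w Af K))"

lemma g_bounds: "1 \<le> K \<Longrightarrow> 0 \<le> (1/2) * log 2 (1 + \<gamma> * cK B w Af K) \<and> (1/2) * log 2 (1 + \<gamma> * cK B w Af K) \<le> H"
proof -
  assume K: "1 \<le> K"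
  have "0 \<le> cK B w Af K" by (rule cK_nonneg[OF B0' Af])
  moreover have "cK B w Af K * real 1 \<le> B" by (rule cK_bound[OF B0' Af]) (use K w1 in auto)
  ultimately show ?thesis using hlog by simp
qed

lemma G_summable: "1 \<le> m \<Longrightarrow> summable (\<lambda>i. G (i + m))"
proof -
  assume m: "1 \<le> m"
  show ?thesis
  proof (rule summable_comparison_test[OF _ summable_geo'[of "p^2 * H"]], intro exI allI impI)
    fix i :: nat
    have g: "0 \<le> (1/2) * log 2 (1 + \<gamma> * cK B w Af (i + m)) \<and> (1/2) * log 2 (1 + \<gamma> * cK B w Af (i + m)) \<le> H"
      using g_bounds m by simp
    have pw: "(1 - p) ^ (i + m - 1) \<le> (1 - p) ^ i" using p0 p1 m by (intro power_decreasing) auto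
    have pw0: "0 \<le> (1 - p) ^ (i + m - 1)" using p1 by simp
    have "G (i + m) \<le> p^2 * (1 - p) ^ i * H"
      unfolding G_def using g pw pw0 by (intro mult_mono) auto
    moreover have "0 \<le> G (i + m)" unfolding G_def using g pw0 by simp
    ultimately show "norm (G (i + m)) \<le> p^2 * H * (1 - p) ^ i" by (simp add: mult_ac)
  qed
qed

definition X :: "nat \<Rightarrow> real" where "X i = p * (1 - p) ^ (i + w) * h i (w + 1)"

lemma X_summable: "summable X"
proof (rule summable_comparison_test[OF _ summable_geo'[of "p * H"]], intro exI allI impI)
  fix i :: nat
  have hb: "0 \<le> h i (w + 1) \<and> h i (w + 1) \<le> H" using h_bounds by simp
  have pw: "(1 - p) ^ (i + w) \<le> (1 - p) ^ i" using p0 p1 by (intro power_decreasing) auto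
  have pw0: "0 \<le> (1 - p) ^ (i + w)" using p1 by simp
  have "X i \<le> p * (1 - p) ^ i * H" unfolding X_def using hb pw pw0 p0 by (intro mult_mono) auto
  moreover have "0 \<le> X i" unfolding X_def using hb pw0 p0 by simp
  ultimately show "norm (X i) \<le> p * H * (1 - p) ^ i" by (simp add: mult_ac)
qed

lemma u_split: "u i = (\<Sum>m\<in>{1..w}. G (i + m)) + X i"
proof -
  have "p * (1 - p) ^ i * (\<Sum>m\<in>{1..w}. p * (1 - p) ^ (m - 1) * h i m) = (\<Sum>m\<in>{1..w}. G (i + m))"
    unfolding sum_distrib_left
  proof (intro sum.cong refl)
    fix m assume m: "m \<in> {1..w}"
    have "(1 - p) ^ (i + m - 1) = (1 - p) ^ i * (1 - p) ^ (m - 1)" using m by (simp add: power_add[symmetric])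
    moreover have "h i m = (1/2) * log 2 (1 + \<gamma> * cK B w Af (i + m))" using m by (simp add: hh_def[OF B0' Af])
    ultimately show "p * (1 - p) ^ i * (p * (1 - p) ^ (m - 1) * h i m) = G (i + m)"
      unfolding G_def by (simp add: power2_eq_square mult_ac)
  qed
  then show ?thesis unfolding u_def v_def X_def by (simp add: algebra_simps power_add)
qed

lemma L_eq: "L = T_inf p \<gamma> B w (xi_seq Af B)"
proof -
  have sG: "summable (\<lambda>i. \<Sum>m\<in>{1..w}. G (i + m))" by (intro summable_sum G_summable) auto
  have "L = (\<Sum>i. (\<Sum>m\<in>{1..w}. G (i + m)) + X i)" unfolding L_def u_split ..
  also have "\<dots> = (\<Sum>i. \<Sum>m\<in>{1..w}. G (i + m)) + (\<Sum>i. X i)"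
    by (rule suminf_add[OF sG X_summable, symmetric])
  also have "(\<Sum>i. \<Sum>m\<in>{1..w}. G (i + m)) = (\<Sum>k\<in>{1..w}. real k * G k) + real w * (\<Sum>n. G (n + w + 1))"
    by (rule double_sum[OF G_summable])
  also have "(\<Sum>k\<in>{1..w}. real k * G k) = (\<Sum>k=1..w. p^2 * (1-p)^(k-1) * (real k / 2) * log 2 (1 + \<gamma> * B / real k))"
  proof (intro sum.cong refl)
    fix k assume k: "k \<in> {1..w}"
    then have "cK B w Af k = B / real k" by (simp add: cK_def[OF B0' Af])
    then show "real k * G k = p^2 * (1-p)^(k-1) * (real k / 2) * log 2 (1 + \<gamma> * B / real k)"
      unfolding G_def by (simp add: mult_ac)
  qed
  also have "real w * (\<Sum>n. G (n + w + 1)) = (\<Sum>n. p^2 * (1-p)^(Suc n + w - 1) * (real w / 2)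
            * log 2 (1 + \<gamma> * (B - (\<Sum>j=1..Suc n. xi_seq Af B j)) / real w))"
  proof -
    have sG': "summable (\<lambda>n. G (n + w + 1))" using G_summable[of "w + 1"] by (simp add: add.assoc)
    have "real w * (\<Sum>n. G (n + w + 1)) = (\<Sum>n. real w * G (n + w + 1))"
      by (rule suminf_mult[OF sG', symmetric])
    also have "\<dots> = (\<Sum>n. p^2 * (1-p)^(Suc n + w - 1) * (real w / 2)
            * log 2 (1 + \<gamma> * (B - (\<Sum>j=1..Suc n. xi_seq Af B j)) / real w))"
    proof (intro suminf_cong)
      fix n
      have "cK B w Af (n + w + 1) = xi_batt Af B (Suc n) / real w"
        using w1 by (simp add: cK_def[OF B0' Af])
      also have "\<dots> = (B - (\<Sum>j=1..Suc n. xi_seq Af B j)) / real w"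
        by (simp only: xi_batt_sum)
      finally have c: "cK B w Af (n + w + 1) = (B - (\<Sum>j=1..Suc n. xi_seq Af B j)) / real w" .
      show "real w * G (n + w + 1) = p^2 * (1-p)^(Suc n + w - 1) * (real w / 2)
            * log 2 (1 + \<gamma> * (B - (\<Sum>j=1..Suc n. xi_seq Af B j)) / real w)"
        unfolding G_def c by (simp add: mult_ac)
    qed
    finally show ?thesis .
  qed
  also have "(\<Sum>i. X i) = (\<Sum>n. p * (1-p)^(Suc n + w - 1) * (1/2) * log 2 (1 + \<gamma> * xi_seq Af B (Suc n)))"
    by (intro suminf_cong) (simp add: X_def hh_def[OF B0' Af] xi_seq_def mult_ac)
  finally show ?thesis unfolding T_inf_def by (simp add: algebra_simps)
qed

end

theorem lemma1:
  fixes p \<gamma> B :: real and w :: nat and Af :: "real \<Rightarrow> real"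
  assumes "0 < p" and "p < 1" and "0 < \<gamma>" and "0 < B" and "1 \<le> w"
    and "\<And>b. 0 \<le> b \<Longrightarrow> 0 \<le> Af b \<and> Af b \<le> b"
    and "is_policy B w (stat_policy B w Af) (return borel 0)"
    and "long_run_throughput p \<gamma> (stat_policy B w Af) (return borel 0)
           = opt_throughput p \<gamma> B w"
  shows "opt_throughput p \<gamma> B w = ereal (T_inf p \<gamma> B w (xi_seq Af B))"
proof -
  have 1: "long_run_throughput p \<gamma> (stat_policy B w Af) (return borel 0) = ereal (T_inf p \<gamma> B w (xi_seq Af B))"
    using long_run_eq[OF assms(1) assms(2) assms(3) assms(4) assms(5) assms(6)]
      L_eq[OF assms(1) assms(2) assms(3) assms(4) assms(5) assms(6)] by simp
  show ?thesis using assms(8) 1 by simp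
qed

end
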